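(* Let $\mathbb{H}$ be a finite dimensional real Hilbert space, $\epsilon\in[0,1)$, and $T\in\mathbb{B}(\mathbb{H})$. Then for any $A\in\mathbb{B}(\mathbb{H})$, $T\perp_B^{\epsilon}A$ if and only if $|\langle Tx,Ax\rangle|\le\epsilon\|T\|\|A\|$ for some $x\in M_T$. Moreover, if $M_T\subseteq M_A$, then $T\perp_B^{\epsilon}A$ if and only if $Tx\perp^{\epsilon}Ax$ for some $x\in M_T$.
   Context: $M_T=\{x\in\mathbb{H}:\|x\|=1,\ \|Tx\|=\|T\|\}$. For $\epsilon\in[0,1)$ and $u,v$ in a normed space, $u\perp_B^{\epsilon}v$ means $\|u+\lambda v\|^2\ge\|u\|^2-2\epsilon\|u\|\|\lambda v\|$ for all $\lambda\in\mathbb{R}$ (operators are taken with the operator norm). In an inner product space, $x\perp^{\epsilon}y$ means $|\langle x,y\rangle|\le\epsilon\|x\|\|y\|$. *)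

theory Defs
  imports "HOL-Analysis.Analysis"
begin

definition bj_eps_orth :: "real \<Rightarrow> 'a::real_normed_vector \<Rightarrow> 'a \<Rightarrow> bool" where
  "bj_eps_orth eps u v \<longleftrightarrow>
     (\<forall>t::real. norm (u + t *\<^sub>R v) ^ 2 \<ge> norm u ^ 2 - 2 * eps * norm u * norm (t *\<^sub>R v))"

definition inner_eps_orth :: "real \<Rightarrow> 'a::real_inner \<Rightarrow> 'a \<Rightarrow> bool" where
  "inner_eps_orth eps x y \<longleftrightarrow> \<bar>inner x y\<bar> \<le> eps * norm x * norm y"

definition norm_attain :: "('a::real_normed_vector \<Rightarrow>\<^sub>L 'b::real_normed_vector) \<Rightarrow> 'a set" where
  "norm_attain T = {x. norm x = 1 \<and> norm (blinfun_apply T x) = norm T}"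

end

theory Submission
  imports Defs
begin

lemma exists_unit: "\<exists>x::'a::euclidean_space. norm x = 1"
  using nonempty_Basis norm_Basis by blast

lemma norm_attained:
  fixes B :: "'a::euclidean_space \<Rightarrow>\<^sub>L 'b::real_normed_vector"
  shows "\<exists>x. norm x = 1 \<and> norm (blinfun_apply B x) = norm B"
proof -
  have "compact (sphere (0::'a) 1)" by simp
  moreover have "sphere (0::'a) 1 \<noteq> {}" using exists_unit[where 'a='a] by auto
  moreover have "continuous_on (sphere 0 1) (\<lambda>x. norm (blinfun_apply B x))"
    by (intro continuous_on_norm linear_continuous_on blinfun.bounded_linear_right)
  ultimately obtain x where x: "x \<in> sphere 0 1" and max: "\<And>y. y \<in> sphere 0 1 \<Longrightarrow> norm (B y) \<le> norm (B x)"
    using continuous_attains_sup[of "sphere 0 1" "\<lambda>x. norm (blinfun_apply B x)"] by auto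
  have nx: "norm x = 1" using x by simp
  have "norm B \<le> norm (B x)"
  proof (rule norm_blinfun_bound)
    show "0 \<le> norm (B x)" by simp
    fix y
    show "norm (B y) \<le> norm (B x) * norm y"
    proof (cases "y = 0")
      case True then show ?thesis by simp
    next
      case False
      let ?u = "y /\<^sub>R norm y"
      have "?u \<in> sphere 0 1" using False by simp
      hence "norm (B ?u) \<le> norm (B x)" by (rule max)
      moreover have "norm (B ?u) = norm (B y) / norm y" by (simp add: blinfun.scaleR_right divide_inverse_commute)
      ultimately show ?thesis using False by (simp add: divide_le_eq)
    qed
  qed
  moreover have "norm (B x) \<le> norm B" using norm_blinfun[of B x] nx by simp
  ultimately show ?thesis using nx by (intro exI[of _ x]) auto
qed

lemma kernel_lemma:
  fixes T :: "'a::real_inner \<Rightarrow>\<^sub>L 'a"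
  assumes x: "norm (T x) = norm T * norm x" and y: "norm (T y) = norm T * norm y"
  shows "norm (T (a *\<^sub>R x + b *\<^sub>R y)) = norm T * norm (a *\<^sub>R x + b *\<^sub>R y)"
proof -
  define S where "S = norm T"
  define Bf where "Bf u v = S^2 * inner u v - inner (T u) (T v)" for u v
  have f_nonneg: "Bf u u \<ge> 0" for u
  proof -
    have "norm (T u) \<le> S * norm u" using norm_blinfun[of T u] by (simp add: S_def)
    hence "norm (T u)^2 \<le> (S * norm u)^2" by (simp add: power_mono)
    thus ?thesis by (simp add: Bf_def power2_norm_eq_inner power_mult_distrib)
  qed
  have fx: "Bf x x = 0" using x by (simp add: Bf_def S_def power2_norm_eq_inner[symmetric] power_mult_distrib)
  have fy: "Bf y y = 0" using y by (simp add: Bf_def S_def power2_norm_eq_inner[symmetric] power_mult_distrib)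
  have exp: "Bf (a *\<^sub>R x + b *\<^sub>R y) (a *\<^sub>R x + b *\<^sub>R y) = a^2 * Bf x x + 2*a*b * Bf x y + b^2 * Bf y y" for a b
    by (simp add: Bf_def blinfun.add_right blinfun.scaleR_right inner_add_left inner_add_right
        inner_commute[of y x] inner_commute[of "T y" "T x"] algebra_simps power2_eq_square)
  have "Bf x y = 0"
  proof -
    have "0 \<le> Bf (1 *\<^sub>R x + (- Bf x y) *\<^sub>R y) (1 *\<^sub>R x + (- Bf x y) *\<^sub>R y)" by (rule f_nonneg)
    also have "\<dots> = - 2 * (Bf x y)^2" by (simp only: exp fx fy) (simp add: power2_eq_square)
    finally show ?thesis by simp
  qed
  hence "Bf (a *\<^sub>R x + b *\<^sub>R y) (a *\<^sub>R x + b *\<^sub>R y) = 0" by (simp add: exp fx fy)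
  hence "norm (T (a *\<^sub>R x + b *\<^sub>R y))^2 = (S * norm (a *\<^sub>R x + b *\<^sub>R y))^2"
    by (simp add: Bf_def power2_norm_eq_inner power_mult_distrib)
  thus ?thesis unfolding S_def by (rule power2_eq_imp_eq) simp_all
qed

lemma norm_sq_expand:
  fixes u v :: "'a::real_inner"
  shows "norm (u + t *\<^sub>R v)^2 = norm u^2 + 2*t*inner u v + t^2 * norm v^2"
  unfolding power2_norm_eq_inner
  by (simp add: inner_add_left inner_add_right inner_commute[of v u] algebra_simps power2_eq_square)

lemma lemma_L:
  fixes T A :: "'a::euclidean_space \<Rightarrow>\<^sub>L 'a" and eps :: real
  assumes bj: "bj_eps_orth eps T A" and eps0: "0 \<le> eps"
  shows "\<exists>x. norm x = 1 \<and> norm (T x) = norm T \<and> inner (T x) (A x) \<ge> - (eps * norm T * norm A)"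
proof -
  define c where "c = eps * norm T * norm A"
  define h where "h x = max (norm T - norm (T x)) (- c - inner (T x) (A x))" for x
  have "compact (sphere (0::'a) 1)" by simp
  moreover have "sphere (0::'a) 1 \<noteq> {}" using exists_unit[where 'a='a] by auto
  have cT: "continuous_on (sphere 0 1) (blinfun_apply T)" by (rule linear_continuous_on[OF blinfun.bounded_linear_right])
  have cA: "continuous_on (sphere 0 1) (blinfun_apply A)" by (rule linear_continuous_on[OF blinfun.bounded_linear_right])
  moreover have "continuous_on (sphere 0 1) h" unfolding h_def
    by (intro continuous_on_max continuous_on_diff continuous_on_const continuous_on_norm continuous_on_inner cT cA)
  ultimately obtain x0 where x0: "x0 \<in> sphere 0 1" and mn: "\<And>y. y \<in> sphere 0 1 \<Longrightarrow> h x0 \<le> h y"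
    using continuous_attains_inf[of "sphere 0 1" h] by auto
  define K where "K = 2 * norm A + norm A ^ 2 + 1"
  have Kpos: "K > 0" unfolding K_def by (simp add: add_nonneg_pos)
  have bound: "h x0 \<le> t * K" if t: "t > 0" for t
  proof -
    obtain x where nx: "norm x = 1" and ax: "norm ((T + t *\<^sub>R A) x) = norm (T + t *\<^sub>R A)"
      using norm_attained by blast
    have eq: "blinfun_apply (T + t *\<^sub>R A) x = T x + t *\<^sub>R A x" by (simp add: blinfun.add_left blinfun.scaleR_left)
    have Ax: "norm (A x) \<le> norm A" using norm_blinfun[of A x] nx by simp
    have Tx: "norm (T x) \<le> norm T" using norm_blinfun[of T x] nx by simp
    have tri1: "norm T - t * norm A \<le> norm (T + t *\<^sub>R A)"
      using norm_triangle_ineq4[of "T + t *\<^sub>R A" "t *\<^sub>R A"] t by simp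
    have tri2: "norm (T x + t *\<^sub>R A x) \<le> norm (T x) + t * norm (A x)"
      using norm_triangle_ineq[of "T x" "t *\<^sub>R A x"] t by simp
    have tA: "t * norm (A x) \<le> t * norm A" using Ax t by (simp add: mult_left_mono)
    have tK1: "t * (2 * norm A) \<le> t * K" using t by (intro mult_left_mono) (auto simp: K_def)
    have a: "norm T - norm (T x) \<le> t * K"
      using tri1 tri2 ax eq tA tK1 by (simp add: algebra_simps)
    have bjt0: "norm (T + t *\<^sub>R A)^2 \<ge> norm T ^ 2 - 2 * eps * norm T * norm (t *\<^sub>R A)"
      using bj unfolding bj_eps_orth_def by blast
    have bjt: "norm (T + t *\<^sub>R A)^2 \<ge> norm T ^ 2 - 2 * c * t"
      using bjt0 t unfolding c_def by (simp add: algebra_simps)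
    have exp: "norm (T + t *\<^sub>R A)^2 = norm (T x)^2 + 2 * t * inner (T x) (A x) + t^2 * norm (A x)^2"
      unfolding ax[symmetric] eq by (rule norm_sq_expand)
    have T2: "norm (T x)^2 \<le> norm T ^2" using Tx by (simp add: power_mono)
    have A2: "t^2 * norm (A x)^2 \<le> t^2 * norm A ^2" using Ax by (intro mult_left_mono) (auto simp: power_mono)
    have "0 \<le> 2 * t * inner (T x) (A x) + 2 * c * t + t^2 * norm A ^2"
      using bjt exp T2 A2 by linarith
    hence "0 \<le> t * (2 * inner (T x) (A x) + 2 * c + t * norm A ^2)"
      by (simp add: algebra_simps power2_eq_square)
    hence "0 \<le> 2 * inner (T x) (A x) + 2 * c + t * norm A ^2"
      using t by (simp add: zero_le_mult_iff)
    moreover have "t * norm A ^ 2 \<le> 2 * (t * K)"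
    proof -
      have "norm A ^ 2 \<le> 2 * K" unfolding K_def using norm_ge_zero[of A] zero_le_power2[of "norm A"] by (smt (verit))
      hence "t * norm A ^ 2 \<le> t * (2 * K)" using t by (intro mult_left_mono) auto
      thus ?thesis by simp
    qed
    ultimately have b: "- c - inner (T x) (A x) \<le> t * K" by linarith
    have "h x \<le> t * K" unfolding h_def using a b by simp
    moreover have "x \<in> sphere 0 1" using nx by simp
    ultimately show ?thesis using mn[of x] by linarith
  qed
  have "h x0 \<le> 0"
  proof (rule ccontr)
    assume "\<not> h x0 \<le> 0"
    hence pos: "h x0 > 0" by simp
    have "h x0 \<le> (h x0 / (2 * K)) * K" using pos Kpos by (intro bound) simp
    also have "\<dots> = h x0 / 2" using Kpos by simp
    finally show False using pos by simp
  qed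
  hence "norm T \<le> norm (T x0)" "- c \<le> inner (T x0) (A x0)" unfolding h_def by auto
  moreover have "norm (T x0) \<le> norm T" using norm_blinfun[of T x0] x0 by simp
  ultimately show ?thesis using x0 unfolding c_def by (intro exI[of _ x0]) auto
qed

lemma part1:
  fixes T A :: "'a::euclidean_space \<Rightarrow>\<^sub>L 'a" and eps :: real
  assumes eps0: "0 \<le> eps"
  shows "bj_eps_orth eps T A \<longleftrightarrow> (\<exists>x\<in>norm_attain T. \<bar>inner (T x) (A x)\<bar> \<le> eps * norm T * norm A)"
proof
  assume "\<exists>x\<in>norm_attain T. \<bar>inner (T x) (A x)\<bar> \<le> eps * norm T * norm A"
  then obtain x where nx: "norm x = 1" and Tx: "norm (T x) = norm T"
    and q: "\<bar>inner (T x) (A x)\<bar> \<le> eps * norm T * norm A"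
    by (auto simp: norm_attain_def)
  show "bj_eps_orth eps T A" unfolding bj_eps_orth_def
  proof
    fix t :: real
    have eq: "blinfun_apply (T + t *\<^sub>R A) x = T x + t *\<^sub>R A x" by (simp add: blinfun.add_left blinfun.scaleR_left)
    have "norm ((T + t *\<^sub>R A) x) \<le> norm (T + t *\<^sub>R A)" using norm_blinfun[of "T + t *\<^sub>R A" x] nx by simp
    hence 1: "norm ((T + t *\<^sub>R A) x)^2 \<le> norm (T + t *\<^sub>R A)^2" by (simp add: power_mono)
    have 2: "norm ((T + t *\<^sub>R A) x)^2 = norm (T x)^2 + 2 * t * inner (T x) (A x) + t^2 * norm (A x)^2"
      unfolding eq by (rule norm_sq_expand)
    have "\<bar>t * inner (T x) (A x)\<bar> \<le> \<bar>t\<bar> * (eps * norm T * norm A)"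
      using q by (simp add: abs_mult mult_left_mono)
    hence 3: "- (2 * \<bar>t\<bar> * (eps * norm T * norm A)) \<le> 2 * t * inner (T x) (A x)"
      using abs_ge_minus_self[of "t * inner (T x) (A x)"] by linarith
    have 4: "t^2 * norm (A x)^2 \<ge> 0" by simp
    have 5: "2 * eps * norm T * norm (t *\<^sub>R A) = 2 * \<bar>t\<bar> * (eps * norm T * norm A)" by simp
    show "norm T ^2 - 2 * eps * norm T * norm (t *\<^sub>R A) \<le> norm (T + t *\<^sub>R A)^2"
    proof -
      have 6: "norm (T x)^2 = norm T^2" using Tx by simp
      show ?thesis using 1 2 3 4 5 6 by linarith
    qed
  qed
next
  assume bj: "bj_eps_orth eps T A"
  define c where "c = eps * norm T * norm A"
  have c0: "c \<ge> 0" unfolding c_def using eps0 by simp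
  have bjm: "bj_eps_orth eps T (-A)" unfolding bj_eps_orth_def
  proof
    fix t :: real
    have "norm (T + (-t) *\<^sub>R A)^2 \<ge> norm T ^2 - 2 * eps * norm T * norm ((-t) *\<^sub>R A)"
      using bj unfolding bj_eps_orth_def by blast
    moreover have "T + (-t) *\<^sub>R A = T + t *\<^sub>R (-A)" by simp
    moreover have "norm ((-t) *\<^sub>R A) = norm (t *\<^sub>R (-A))" by simp
    ultimately show "norm (T + t *\<^sub>R (-A))^2 \<ge> norm T ^2 - 2 * eps * norm T * norm (t *\<^sub>R (-A))" by simp
  qed
  obtain x1 where nx1: "norm x1 = 1" and Tx1: "norm (T x1) = norm T" and qx1: "inner (T x1) (A x1) \<ge> - c"
    using lemma_L[OF bj eps0] unfolding c_def by blast
  obtain y where ny: "norm y = 1" and Ty: "norm (T y) = norm T" and qy0: "inner (T y) ((-A) y) \<ge> - (eps * norm T * norm (-A))"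
    using lemma_L[OF bjm eps0] by blast
  have qy: "inner (T y) (A y) \<le> c" using qy0 unfolding c_def by (simp add: blinfun.minus_left)
  have x1M: "x1 \<in> norm_attain T" and yM: "y \<in> norm_attain T"
    using nx1 Tx1 ny Ty by (auto simp: norm_attain_def)
  show "\<exists>x\<in>norm_attain T. \<bar>inner (T x) (A x)\<bar> \<le> eps * norm T * norm A"
  proof (cases "\<bar>inner (T x1) (A x1)\<bar> \<le> c \<or> \<bar>inner (T y) (A y)\<bar> \<le> c")
    case True
    then show ?thesis using x1M yM unfolding c_def by blast
  next
    case False
    hence gx: "inner (T x1) (A x1) > c" and gy: "inner (T y) (A y) < - c" using qx1 qy by auto
    define z where "z s = (1 - s) *\<^sub>R x1 + s *\<^sub>R y" for s :: real
    define g where "g s = inner (T (z s)) (A (z s))" for s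
    have cz: "continuous_on {0..1} z" unfolding z_def
      by (intro continuous_on_add continuous_on_scaleR continuous_on_diff continuous_on_const continuous_on_id)
    have cT: "continuous_on (z ` {0..1}) (blinfun_apply T)" by (rule linear_continuous_on[OF blinfun.bounded_linear_right])
    have cA: "continuous_on (z ` {0..1}) (blinfun_apply A)" by (rule linear_continuous_on[OF blinfun.bounded_linear_right])
    have "continuous_on {0..1} g" unfolding g_def
      by (intro continuous_on_inner continuous_on_compose[OF cz cT, unfolded o_def]
          continuous_on_compose[OF cz cA, unfolded o_def])
    moreover have "g 1 \<le> 0" using gy c0 unfolding g_def z_def by simp
    moreover have "0 \<le> g 0" using gx c0 unfolding g_def z_def by simp
    ultimately obtain s where s0: "0 \<le> s" and s1: "s \<le> 1" and gs: "g s = 0"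
      using IVT2'[of g 1 0 0] by auto
    have yx: "y \<noteq> - x1"
    proof
      assume "y = - x1"
      hence "inner (T y) (A y) = inner (T x1) (A x1)" by (simp add: blinfun.minus_right)
      thus False using gx gy c0 by simp
    qed
    have zn: "z s \<noteq> 0"
    proof
      assume z0: "z s = 0"
      hence e: "(1 - s) *\<^sub>R x1 = (- s) *\<^sub>R y" unfolding z_def by (simp add: eq_neg_iff_add_eq_0)
      hence "norm ((1 - s) *\<^sub>R x1) = norm ((- s) *\<^sub>R y)" by simp
      hence "\<bar>1 - s\<bar> = \<bar>s\<bar>" using nx1 ny by simp
      hence sh: "s = 1/2" using s0 s1 by linarith
      have "z (1/2) = 0" using z0 sh by simp
      hence "(1/2::real) *\<^sub>R (x1 + y) = 0" unfolding z_def by (simp add: scaleR_add_right)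
      hence "x1 + y = 0" by simp
      hence "y = - x1" by (simp add: eq_neg_iff_add_eq_0 add.commute)
      thus False using yx by simp
    qed
    have nzT: "norm (T (z s)) = norm T * norm (z s)"
      unfolding z_def by (rule kernel_lemma) (simp_all add: Tx1 Ty nx1 ny)
    define w where "w = z s /\<^sub>R norm (z s)"
    have nzp: "norm (z s) > 0" using zn by simp
    have nw: "norm w = 1" unfolding w_def using zn by simp
    have Tw: "norm (T w) = norm T" unfolding w_def using nzp nzT by (simp add: blinfun.scaleR_right)
    have qw: "inner (T w) (A w) = 0" unfolding w_def using gs unfolding g_def
      by (simp add: blinfun.scaleR_right)
    have wM: "w \<in> norm_attain T" using nw Tw by (simp add: norm_attain_def)
    have "\<bar>inner (T w) (A w)\<bar> \<le> eps * norm T * norm A" using qw c0 unfolding c_def by simp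
    thus ?thesis using wM by blast
  qed
qed

theorem mainTheorem4:
  fixes T :: "'a::euclidean_space \<Rightarrow>\<^sub>L 'a" and eps :: real
  assumes "0 \<le> eps" and "eps < 1"
  shows "(\<forall>A :: 'a \<Rightarrow>\<^sub>L 'a. bj_eps_orth eps T A \<longleftrightarrow>
            (\<exists>x\<in>norm_attain T. \<bar>inner (blinfun_apply T x) (blinfun_apply A x)\<bar> \<le> eps * norm T * norm A))
       \<and> (\<forall>A :: 'a \<Rightarrow>\<^sub>L 'a. norm_attain T \<subseteq> norm_attain A \<longrightarrow>
            (bj_eps_orth eps T A \<longleftrightarrow>
             (\<exists>x\<in>norm_attain T. inner_eps_orth eps (blinfun_apply T x) (blinfun_apply A x))))"
proof (intro conjI allI impI)
  fix A :: "'a \<Rightarrow>\<^sub>L 'a"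
  show "bj_eps_orth eps T A \<longleftrightarrow>
            (\<exists>x\<in>norm_attain T. \<bar>inner (blinfun_apply T x) (blinfun_apply A x)\<bar> \<le> eps * norm T * norm A)"
    by (rule part1[OF assms(1)])
next
  fix A :: "'a \<Rightarrow>\<^sub>L 'a"
  assume sub: "norm_attain T \<subseteq> norm_attain A"
  have "inner_eps_orth eps (T x) (A x) \<longleftrightarrow> \<bar>inner (T x) (A x)\<bar> \<le> eps * norm T * norm A"
    if "x \<in> norm_attain T" for x
  proof -
    have "norm (T x) = norm T" "norm (A x) = norm A" using that sub by (auto simp: norm_attain_def)
    thus ?thesis by (simp add: inner_eps_orth_def)
  qed
  thus "bj_eps_orth eps T A \<longleftrightarrow>
             (\<exists>x\<in>norm_attain T. inner_eps_orth eps (blinfun_apply T x) (blinfun_apply A x))"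
    using part1[OF assms(1), of T A] by auto
qed

end
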